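(* Let $m_1,m_2\in\mathbb{N}$, $a>0$, $V\in\big[L^2((0,\infty))\big]^{m\times m}$ with $\operatorname{supp}(V)\subseteq[0,a]$. Then for each $k\ge0$ there is an $m_2\times m_1$ matrix function $\mathcal{A}_k$, integrable on $(0,(k+1)a)$ (unique a.e.), such that \[ M_{2k+1}(z;V)=\int_0^{(k+1)a}e^{2iz\alpha}\mathcal{A}_k(\alpha)\,d\alpha . \] Moreover, if $v$ is continuous and $\max_x\|v(x)\|\le c$ for some $c\in(0,\infty)$ (operator norm), then $\|\mathcal{A}_k(\alpha)\|\le c^{2k+1}f_k(\alpha)$ for a.e. $\alpha$, where $f_k(\alpha)=(-1)^{k+1}\widehat{\mathcal{A}}_k(\alpha)$ and $\widehat{\mathcal{A}}_k$ denotes the function $\mathcal{A}_k$ in the scalar case $m_1=m_2=1$ with $v=\widehat v$, $\widehat v(x)=i$ for $x\in[0,a]$ and $\widehat v(x)=0$ for $x>a$.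
   Context: $m=m_1+m_2$, $V=\begin{bmatrix}0_{m_1}&v\\ v^*&0_{m_2}\end{bmatrix}$ with $v$ an $m_1\times m_2$ matrix function. For $k\ge 0$ and $z\in\mathbb{C}_+$, $M_{2k+1}(z;V)=(-1)^{k+1}i\int_{\Omega_k} e^{2iz\alpha}\,v(x_{2k})^*v(x_{2k-1})v(x_{2k-2})^*\cdots v(x_1)v(x_0)^*\,dx_0\cdots dx_{2k}$, with $\alpha=x_{2k}-x_{2k-1}+x_{2k-2}-\cdots-x_1+x_0$ and $\Omega_k=\{0\le x_{2k}\le a;\ 0\le x_{2j-1}\le x_{2j},\ x_{2j-1}\le x_{2j-2}\le a\ (j=1,\dots,k)\}$. *)

theory Defs
  imports "HOL-Analysis.Analysis"
begin

text \<open>Matrices over complex numbers are modelled with the Cartesian type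
  complex ^ 'c ^ 'r  (rows indexed by 'r, columns by 'c).\<close>

definition cadj :: "complex ^ 'c ^ 'r \<Rightarrow> complex ^ 'r ^ 'c" where
  "cadj A = (\<chi> i j. cnj (A $ j $ i))"

definition smat :: "complex \<Rightarrow> complex ^ 'c ^ 'r \<Rightarrow> complex ^ 'c ^ 'r" where
  "smat s A = (\<chi> i j. s * A $ i $ j)"

definition opnorm :: "complex ^ 'c ^ 'r \<Rightarrow> real" where
  "opnorm A = onorm (\<lambda>x. A *v x)"

text \<open>The product  v(x_{2k})^* v(x_{2k-1}) v(x_{2k-2})^* ... v(x_1) v(x_0)^*.\<close>
fun vprod :: "(real \<Rightarrow> complex ^ 'm2 ^ 'm1) \<Rightarrow> nat \<Rightarrow> (nat \<Rightarrow> real) \<Rightarrow> complex ^ 'm1 ^ 'm2" where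
  "vprod v 0 x = cadj (v (x 0))"
| "vprod v (Suc k) x = cadj (v (x (2 * k + 2))) ** v (x (2 * k + 1)) ** vprod v k x"

definition alt :: "nat \<Rightarrow> (nat \<Rightarrow> real) \<Rightarrow> real" where
  "alt k x = (\<Sum>j\<le>2 * k. (-1) ^ j * x j)"

definition Omega :: "nat \<Rightarrow> real \<Rightarrow> (nat \<Rightarrow> real) set" where
  "Omega k a = {x. 0 \<le> x (2 * k) \<and> x (2 * k) \<le> a \<and>
     (\<forall>j\<in>{1..k}. 0 \<le> x (2 * j - 1) \<and> x (2 * j - 1) \<le> x (2 * j) \<and>
                  x (2 * j - 1) \<le> x (2 * j - 2) \<and> x (2 * j - 2) \<le> a)}"

definition Modd :: "nat \<Rightarrow> real \<Rightarrow> (real \<Rightarrow> complex ^ 'm2 ^ 'm1) \<Rightarrow> complex \<Rightarrow> complex ^ 'm1 ^ 'm2" where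
  "Modd k a v z = smat ((-1) ^ (k + 1) * \<i>)
     (LINT x | (\<Pi>\<^sub>M j\<in>{..2 * k}. (lborel :: real measure)).
        indicator (Omega k a) x *\<^sub>R smat (exp (2 * \<i> * z * complex_of_real (alt k x))) (vprod v k x))"

definition represents :: "nat \<Rightarrow> real \<Rightarrow> (real \<Rightarrow> complex ^ 'm2 ^ 'm1) \<Rightarrow> (real \<Rightarrow> complex ^ 'm1 ^ 'm2) \<Rightarrow> bool" where
  "represents k a v A \<longleftrightarrow>
     set_integrable lborel {0<..<real (k + 1) * a} A \<and>
     (\<forall>z. Im z > 0 \<longrightarrow>
        Modd k a v z = set_lebesgue_integral lborel {0<..<real (k + 1) * a}
                         (\<lambda>\<alpha>. smat (exp (2 * \<i> * z * complex_of_real \<alpha>)) (A \<alpha>)))"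

definition vhat :: "real \<Rightarrow> real \<Rightarrow> complex ^ 1 ^ 1" where
  "vhat a x = (if x \<in> {0..a} then (\<chi> i j. \<i>) else 0)"

end

theory Submission
  imports Defs "HOL-Probability.Levy"
begin
definition Jk :: "nat \<Rightarrow> nat set" where "Jk k = {1..2*k}"

lemma Jk_le: "i \<in> Jk k \<Longrightarrow> i \<le> 2*k" by (simp add: Jk_def)

lemma Jk_fin[simp]: "finite (Jk k)" and Jk_0[simp]: "0 \<notin> Jk k"
  by (auto simp: Jk_def)

definition rr :: "nat \<Rightarrow> (nat \<Rightarrow> real) \<Rightarrow> real" where
  "rr k y = (\<Sum>j\<in>Jk k. (-1)^j * y j)"

definition Phi :: "nat \<Rightarrow> real \<times> (nat \<Rightarrow> real) \<Rightarrow> (nat \<Rightarrow> real)" where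
  "Phi k p = (snd p)(0 := fst p - rr k (snd p))"

abbreviation NN :: "nat \<Rightarrow> (nat \<Rightarrow> real) measure" where
  "NN k \<equiv> PiM (Jk k) (\<lambda>_. lborel)"
abbreviation PP :: "nat \<Rightarrow> (nat \<Rightarrow> real) measure" where
  "PP k \<equiv> PiM {..2*k} (\<lambda>_. lborel)"

interpretation lbp: product_sigma_finite "\<lambda>_::nat. lborel::real measure"
  by standard

lemma atMost_insert0: "{..2*k} = insert 0 (Jk k)" by (auto simp: Jk_def)

lemma alt_Phi: "alt k (Phi k (t, y)) = t"
proof -
  have "alt k (Phi k (t, y)) = (t - rr k y) + (\<Sum>j\<in>Jk k. (-1)^j * y j)"
    unfolding alt_def Phi_def atMost_insert0
    by (subst sum.insert) (auto intro!: sum.cong)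
  then show ?thesis by (simp add: rr_def)
qed

lemma rr_meas[measurable]: "rr k \<in> borel_measurable (NN k)"
  unfolding rr_def by (intro borel_measurable_sum) measurable

lemma sf_NN: "sigma_finite_measure (NN k)"
  by (rule lbp.sigma_finite) simp

lemma psf: "pair_sigma_finite lborel (NN k)"
  by (simp add: pair_sigma_finite_def sf_NN sigma_finite_lborel)

lemma Phi_meas[measurable]: "Phi k \<in> (lborel \<Otimes>\<^sub>M NN k) \<rightarrow>\<^sub>M PP k"
proof (rule measurable_PiM_single')
  fix i assume i: "i \<in> {..2*k}"
  show "(\<lambda>p. Phi k p i) \<in> (lborel \<Otimes>\<^sub>M NN k) \<rightarrow>\<^sub>M lborel"
  proof (cases "i = 0")
    case True
    have "(\<lambda>p. rr k (snd p)) \<in> borel_measurable (lborel \<Otimes>\<^sub>M NN k)"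
      using measurable_comp[OF measurable_snd rr_meas] by (simp add: comp_def)
    moreover have "fst \<in> borel_measurable (lborel \<Otimes>\<^sub>M NN k)"
      using measurable_fst[of lborel "NN k"] by simp
    ultimately show ?thesis using True unfolding Phi_def by (simp add: borel_measurable_diff)
  next
    case False
    then have "(\<lambda>p. Phi k p i) = (\<lambda>p. snd p i)" unfolding Phi_def by auto
    then show ?thesis using False i by (simp add: Jk_def)
  qed
next
  show "(\<lambda>p i. Phi k p i) \<in> space (lborel \<Otimes>\<^sub>M NN k) \<rightarrow> (\<Pi>\<^sub>E i\<in>{..2*k}. space lborel)"
    unfolding Phi_def by (auto simp: space_pair_measure space_PiM PiE_def extensional_def dest: Jk_le)
qed

lemma lborel_shift_vimage:
  assumes "B \<in> sets lborel"
  shows "emeasure lborel ((\<lambda>t::real. t - c) -` B) = emeasure lborel B"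
proof -
  have "emeasure lborel B = emeasure (distr lborel borel ((+) (-c))) B"
    by (simp add: lborel_distr_plus)
  also have "\<dots> = emeasure lborel ((+) (-c) -` B)"
    using assms by (subst emeasure_distr) auto
  moreover have "(\<lambda>t. t - c) = (+) (-c)" by auto
  ultimately show ?thesis by simp
qed

lemma Phi_in_PiE:
  assumes y: "y \<in> space (NN k)"
  shows "Phi k (x,y) \<in> Pi\<^sub>E {..2*k} A \<longleftrightarrow> (x - rr k y \<in> A 0 \<and> y \<in> Pi\<^sub>E (Jk k) A)"
proof -
  have ext: "y \<in> extensional (Jk k)" using y by (simp add: space_PiM PiE_iff)
  have "Phi k (x,y) \<in> extensional {..2*k}"
    using ext unfolding Phi_def extensional_def atMost_insert0 by auto
  moreover have "(\<forall>i\<in>{..2*k}. Phi k (x,y) i \<in> A i) \<longleftrightarrow> (x - rr k y \<in> A 0 \<and> (\<forall>i\<in>Jk k. y i \<in> A i))"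
  proof -
    have eq: "\<And>i. i \<in> Jk k \<Longrightarrow> Phi k (x,y) i = y i"
      unfolding Phi_def using Jk_0 by (metis fun_upd_other snd_conv)
    have e0: "Phi k (x,y) 0 = x - rr k y" by (simp add: Phi_def)
    have "(\<forall>i\<in>Jk k. Phi k (x,y) i \<in> A i) \<longleftrightarrow> (\<forall>i\<in>Jk k. y i \<in> A i)"
      using eq by (metis (no_types))
    then show ?thesis unfolding atMost_insert0 ball_simps e0 by blast
  qed
  ultimately show ?thesis using ext by (simp add: PiE_iff)
qed

lemma distr_Phi: "distr (lborel \<Otimes>\<^sub>M NN k) (PP k) (Phi k) = PP k"
proof (rule lbp.PiM_eqI)
  fix A :: "nat \<Rightarrow> real set" assume A: "\<And>i. i \<in> {..2*k} \<Longrightarrow> A i \<in> sets lborel"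
  interpret P: pair_sigma_finite lborel "NN k" by (rule psf)
  interpret N: finite_product_sigma_finite "\<lambda>_::nat. lborel::real measure" "{1..2*k}"
    by standard simp
  let ?S = "Phi k -` Pi\<^sub>E {..2*k} A \<inter> space (lborel \<Otimes>\<^sub>M NN k)"
  have S: "?S \<in> sets (lborel \<Otimes>\<^sub>M NN k)"
    using A by (intro measurable_sets[OF Phi_meas] sets_PiM_I_finite) auto
  have "emeasure (distr (lborel \<Otimes>\<^sub>M NN k) (PP k) (Phi k)) (Pi\<^sub>E {..2*k} A) = emeasure (lborel \<Otimes>\<^sub>M NN k) ?S"
    using A by (subst emeasure_distr) auto
  also have "\<dots> = (\<integral>\<^sup>+y. emeasure lborel ((\<lambda>x. (x, y)) -` ?S) \<partial>NN k)"
    by (rule P.emeasure_pair_measure_alt2[OF S])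
  also have "\<dots> = (\<integral>\<^sup>+y. emeasure lborel (A 0) * indicator (Pi\<^sub>E (Jk k) A) y \<partial>NN k)"
  proof (rule nn_integral_cong)
    fix y assume y: "y \<in> space (NN k)"
    have "(\<lambda>x. (x, y)) -` ?S = (if y \<in> Pi\<^sub>E (Jk k) A then (\<lambda>t. t - rr k y) -` A 0 else {})"
      using y by (auto simp: Phi_in_PiE space_pair_measure)
    then show "emeasure lborel ((\<lambda>x. (x, y)) -` ?S) = emeasure lborel (A 0) * indicator (Pi\<^sub>E (Jk k) A) y"
      using A[of 0] by (simp add: lborel_shift_vimage)
  qed
  also have "\<dots> = emeasure lborel (A 0) * emeasure (NN k) (Pi\<^sub>E (Jk k) A)"
    using A by (subst nn_integral_cmult_indicator) (auto intro!: sets_PiM_I_finite dest: Jk_le)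
  also have "\<dots> = (\<Prod>i\<in>{..2*k}. emeasure lborel (A i))"
  proof -
    have "emeasure (NN k) (Pi\<^sub>E (Jk k) A) = (\<Prod>i\<in>Jk k. emeasure lborel (A i))"
      using A by (intro lbp.emeasure_PiM) (auto dest: Jk_le)
    then show ?thesis unfolding atMost_insert0 by (simp only: prod.insert[OF Jk_fin Jk_0])
  qed
  finally show "emeasure (distr (lborel \<Otimes>\<^sub>M NN k) (PP k) (Phi k)) (Pi\<^sub>E {..2*k} A) = (\<Prod>i\<in>{..2*k}. emeasure lborel (A i))" .
qed simp_all

lemma bl_mv: "bounded_linear (\<lambda>x. (A::complex^'n^'m) *v x)"
  by (rule matrix_vector_mul_bounded_linear)

lemma opnorm_le: "norm ((A::complex^'n^'m) *v x) \<le> opnorm A * norm x"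
  unfolding opnorm_def by (rule onorm[OF bl_mv])

lemma opnorm_nonneg: "0 \<le> opnorm (A::complex^'n^'m)"
  unfolding opnorm_def by (rule onorm_pos_le[OF bl_mv])

lemma norm_vec_le_sum: "norm (x::'a::real_normed_vector^'n) \<le> (\<Sum>i\<in>UNIV. norm (x$i))"
  unfolding norm_vec_def by (rule L2_set_le_sum) auto

lemma norm_cscale_vec: "norm (\<chi> i. s * (x::complex^'n)$i) = cmod s * norm x"
proof -
  have "norm (\<chi> i. s * x$i) = L2_set (\<lambda>i. cmod s * norm (x$i)) UNIV"
    unfolding norm_vec_def by (simp add: norm_mult)
  also have "\<dots> = cmod s * norm x"
    unfolding norm_vec_def by (simp add: L2_set_right_distrib)
  finally show ?thesis .
qed

lemma norm_smat: "norm (smat s (A::complex^'n^'m)) = cmod s * norm A"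
proof -
  have r: "norm ((smat s A)$i) = cmod s * norm (A$i)" for i
    unfolding smat_def by (simp only: vec_lambda_beta norm_cscale_vec)
  have "norm (smat s A) = L2_set (\<lambda>i. cmod s * norm (A$i)) UNIV"
    unfolding norm_vec_def[of "smat s A"] r by simp
  also have "\<dots> = cmod s * norm A"
    unfolding norm_vec_def[of A] by (simp add: L2_set_right_distrib)
  finally show ?thesis .
qed

lemma smat_add: "smat s (A + B) = smat s A + smat s B"
  by (simp add: smat_def vec_eq_iff algebra_simps)
lemma smat_scaleR: "smat s (r *\<^sub>R A) = r *\<^sub>R smat s A"
  by (simp add: smat_def vec_eq_iff scaleR_conv_of_real algebra_simps)
lemma smat_smat: "smat s (smat t A) = smat (s * t) A"
  by (simp add: smat_def vec_eq_iff algebra_simps)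
lemma smat_1[simp]: "smat 1 A = A"
  by (simp add: smat_def vec_eq_iff)
lemma smat_0[simp]: "smat s 0 = 0"
  by (simp add: smat_def vec_eq_iff)
lemma smat_diff: "smat s (A - B) = smat s A - smat s B"
  by (simp add: smat_def vec_eq_iff algebra_simps)

lemma bl_smat: "bounded_linear (smat s :: complex^'n^'m \<Rightarrow> _)"
  by (rule bounded_linear_intro[where K="cmod s"]) (auto simp: smat_add smat_scaleR norm_smat)

lemma smat_mv: "smat s A *v x = (\<chi> i. s * (A *v x)$i)"
  by (simp add: smat_def vec_eq_iff matrix_vector_mult_def sum_distrib_left algebra_simps)

lemma norm_smat_mv: "norm (smat s A *v x) = cmod s * norm (A *v x)"
  by (simp add: smat_mv norm_cscale_vec)

lemma bl_mv_left: "bounded_linear (\<lambda>A::complex^'n^'m. A *v x)"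
proof -
  have "linear (\<lambda>A::complex^'n^'m. A *v x)"
    by (rule linearI) (simp_all add: vec_eq_iff matrix_vector_mult_def sum.distrib
         mult_scaleR_left scaleR_sum_right algebra_simps)
  then show ?thesis by (simp add: linear_conv_bounded_linear)
qed

lemma bl_entry: "bounded_linear (\<lambda>A::complex^'n^'m. A $ i $ j)"
proof -
  have "bounded_linear (\<lambda>v::complex^'n. v $ j)" by (rule bounded_linear_vec_nth)
  moreover have "bounded_linear (\<lambda>A::complex^'n^'m. A $ i)" by (rule bounded_linear_vec_nth)
  ultimately show ?thesis by (rule bounded_linear_compose)
qed

lemma norm_entry_le: "cmod (A $ i $ j) \<le> norm (A::complex^'n^'m)"
proof -
  have "norm ((A $ i) $ j) \<le> norm (A $ i)" by (rule Finite_Cartesian_Product.norm_nth_le)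
  also have "\<dots> \<le> norm A" by (rule Finite_Cartesian_Product.norm_nth_le)
  finally show ?thesis by simp
qed

lemma norm_mat_le_sum: "norm (A::complex^'n^'m) \<le> (\<Sum>i\<in>UNIV. \<Sum>j\<in>UNIV. cmod (A$i$j))"
proof -
  have "norm A \<le> (\<Sum>i\<in>UNIV. norm (A$i))" by (rule norm_vec_le_sum)
  also have "\<dots> \<le> (\<Sum>i\<in>UNIV. \<Sum>j\<in>UNIV. cmod (A$i$j))"
    by (intro sum_mono norm_vec_le_sum)
  finally show ?thesis .
qed

lemma norm_mult_crude:
  "norm ((A::complex^'j^'i) ** (B::complex^'k^'j)) \<le> real (CARD('i) * CARD('j) * CARD('k)) * norm A * norm B"
proof -
  have e: "cmod ((A ** B)$i$k) \<le> real CARD('j) * (norm A * norm B)" for i k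
  proof -
    have "cmod ((A ** B)$i$k) = cmod (\<Sum>j\<in>UNIV. A$i$j * B$j$k)"
      by (simp add: matrix_matrix_mult_def)
    also have "\<dots> \<le> (\<Sum>j\<in>UNIV. cmod (A$i$j) * cmod (B$j$k))"
      by (rule order_trans[OF norm_sum]) (simp add: norm_mult)
    also have "\<dots> \<le> (\<Sum>j\<in>(UNIV::'j set). norm A * norm B)"
      by (intro sum_mono mult_mono norm_entry_le) auto
    finally show ?thesis by simp
  qed
  have "norm (A ** B) \<le> (\<Sum>i\<in>UNIV. \<Sum>k\<in>UNIV. cmod ((A ** B)$i$k))" by (rule norm_mat_le_sum)
  also have "\<dots> \<le> (\<Sum>i\<in>(UNIV::'i set). \<Sum>k\<in>(UNIV::'k set). real CARD('j) * (norm A * norm B))"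
    by (intro sum_mono e)
  finally show ?thesis by (simp add: algebra_simps)
qed

lemma norm_cadj_crude: "norm (cadj (A::complex^'n^'m)) \<le> real (CARD('n) * CARD('m)) * norm A"
proof -
  have "norm (cadj A) \<le> (\<Sum>i\<in>UNIV. \<Sum>j\<in>UNIV. cmod (cadj A$i$j))" by (rule norm_mat_le_sum)
  also have "\<dots> \<le> (\<Sum>i\<in>(UNIV::'n set). \<Sum>j\<in>(UNIV::'m set). norm A)"
    by (intro sum_mono) (simp add: cadj_def norm_entry_le)
  finally show ?thesis by (simp add: algebra_simps)
qed

lemma inner_cadj: "inner (cadj A *v y) x = inner y ((A::complex^'n^'m) *v x)"
proof -
  have ic: "inner u w = Re (cnj u * w)" for u w :: complex
    by (simp add: inner_complex_def)
  have "inner (cadj A *v y) x = Re (\<Sum>j\<in>UNIV. cnj ((cadj A *v y)$j) * x$j)"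
    unfolding inner_vec_def ic by (simp only: Re_sum)
  also have "(\<Sum>j\<in>UNIV. cnj ((cadj A *v y)$j) * x$j) = (\<Sum>j\<in>UNIV. \<Sum>i\<in>UNIV. A$i$j * cnj (y$i) * x$j)"
    by (simp add: cadj_def matrix_vector_mult_def sum_distrib_right)
  also have "\<dots> = (\<Sum>i\<in>UNIV. \<Sum>j\<in>UNIV. A$i$j * cnj (y$i) * x$j)"
    by (rule sum.swap)
  also have "\<dots> = (\<Sum>i\<in>UNIV. cnj (y$i) * (A *v x)$i)"
    by (simp add: matrix_vector_mult_def sum_distrib_left algebra_simps)
  also have "Re \<dots> = inner y (A *v x)"
    unfolding inner_vec_def ic by (simp only: Re_sum)
  finally show ?thesis .
qed

lemma opnorm_cadj: "opnorm (cadj (A::complex^'n^'m)) \<le> opnorm A"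
  unfolding opnorm_def[of "cadj A"]
proof (rule onorm_bound)
  show "0 \<le> opnorm A" by (rule opnorm_nonneg)
  fix y
  let ?u = "cadj A *v y"
  have "norm ?u ^ 2 = inner ?u ?u" by (simp add: power2_norm_eq_inner)
  also have "\<dots> = inner y (A *v ?u)" by (rule inner_cadj)
  also have "\<dots> \<le> norm y * norm (A *v ?u)" by (rule norm_cauchy_schwarz)
  also have "\<dots> \<le> norm y * (opnorm A * norm ?u)"
    by (intro mult_left_mono opnorm_le) auto
  finally have *: "norm ?u * norm ?u \<le> (opnorm A * norm y) * norm ?u"
    by (simp add: power2_eq_square algebra_simps)
  show "norm ?u \<le> opnorm A * norm y"
  proof (cases "norm ?u = 0")
    case True then show ?thesis using opnorm_nonneg[of A] by simp
  next
    case False then show ?thesis using * by (simp add: mult_le_cancel_right)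
  qed
qed

lemma cadj_cont: "continuous_on UNIV (cadj :: complex^'n^'m \<Rightarrow> _)"
  unfolding cadj_def by (intro continuous_intros)

lemma mult_cont: "continuous_on UNIV (\<lambda>p. fst p ** (snd p :: complex^'k^'j) :: complex^'k^'i)"
  unfolding matrix_matrix_mult_def by (intro continuous_intros)

lemma cadj_meas[measurable]: "f \<in> borel_measurable M \<Longrightarrow> (\<lambda>x. cadj (f x :: complex^'n^'m)) \<in> borel_measurable M"
  by (rule borel_measurable_continuous_on[OF cadj_cont])

lemma mult_meas[measurable]: "f \<in> borel_measurable M \<Longrightarrow> g \<in> borel_measurable M \<Longrightarrow>
   (\<lambda>x. (f x :: complex^'j^'i) ** (g x :: complex^'k^'j)) \<in> borel_measurable M"
  by (rule borel_measurable_continuous_Pair[OF _ _ mult_cont])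

lemma coord_meas: assumes "i \<in> I"
  shows "(\<lambda>x. x i) \<in> borel_measurable (PiM I (\<lambda>_. lborel::real measure))"
  using measurable_component_singleton[OF assms, of "\<lambda>_. lborel"] by simp

lemma comp_meas: assumes w: "w \<in> borel_measurable lborel" and i: "i \<in> I"
  shows "(\<lambda>x. w (x i)) \<in> borel_measurable (PiM I (\<lambda>_. lborel::real measure))"
proof -
  have "(\<lambda>x. x i) \<in> PiM I (\<lambda>_. lborel::real measure) \<rightarrow>\<^sub>M lborel"
    using measurable_component_singleton[OF i, of "\<lambda>_. lborel"] by simp
  from measurable_compose[OF this w] show ?thesis .
qed

lemma pred_coord: assumes "i \<in> I" "j \<in> I"
  shows "Measurable.pred (PiM I (\<lambda>_. lborel::real measure)) (\<lambda>x. x i \<le> x j)"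
    "Measurable.pred (PiM I (\<lambda>_. lborel::real measure)) (\<lambda>x. x i \<le> c)"
    "Measurable.pred (PiM I (\<lambda>_. lborel::real measure)) (\<lambda>x. c \<le> x i)"
proof -
  note m = coord_meas[OF assms(1)] coord_meas[OF assms(2)]
  show "Measurable.pred (PiM I (\<lambda>_. lborel::real measure)) (\<lambda>x. x i \<le> x j)"
    unfolding pred_def by (rule borel_measurable_le[OF m])
  show "Measurable.pred (PiM I (\<lambda>_. lborel::real measure)) (\<lambda>x. x i \<le> c)"
    unfolding pred_def by (rule borel_measurable_le[OF m(1) borel_measurable_const])
  show "Measurable.pred (PiM I (\<lambda>_. lborel::real measure)) (\<lambda>x. c \<le> x i)"
    unfolding pred_def by (rule borel_measurable_le[OF borel_measurable_const m(1)])
qed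

lemma vprod_meas:
  assumes w: "w \<in> borel_measurable lborel" and I: "{..2*k} \<subseteq> I"
  shows "vprod w k \<in> borel_measurable (PiM I (\<lambda>_. lborel))"
  using I
proof (induction k)
  case 0
  have "(\<lambda>x. w (x 0)) \<in> borel_measurable (PiM I (\<lambda>_. lborel))"
    using 0 by (intro comp_meas[OF w]) auto
  then show ?case by (simp add: cadj_meas)
next
  case (Suc k)
  have a: "(\<lambda>x. w (x (2*k+2))) \<in> borel_measurable (PiM I (\<lambda>_. lborel))"
    using Suc.prems by (intro comp_meas[OF w]) auto
  have b: "(\<lambda>x. w (x (2*k+1))) \<in> borel_measurable (PiM I (\<lambda>_. lborel))"
    using Suc.prems by (intro comp_meas[OF w]) auto
  have c: "vprod w k \<in> borel_measurable (PiM I (\<lambda>_. lborel))"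
    using Suc.prems by (intro Suc.IH) auto
  show ?case
    by (simp only: vprod.simps) (intro mult_meas cadj_meas a b c)
qed

lemma vprod_norm_bound:
  "\<exists>C\<ge>0. \<forall>x. norm (vprod (w::real \<Rightarrow> complex^'m2^'m1) k x) \<le> C * (\<Prod>j\<le>2*k. norm (w (x j)))"
proof (induction k)
  case 0
  show ?case
  proof (intro exI[of _ "real (CARD('m2) * CARD('m1))"] conjI allI)
    fix x show "norm (vprod w 0 x) \<le> real (CARD('m2) * CARD('m1)) * (\<Prod>j\<le>2*0. norm (w (x j)))"
      using norm_cadj_crude[of "w (x 0)"] by simp
  qed simp
next
  case (Suc k)
  then obtain C where C: "C \<ge> 0" "\<And>x. norm (vprod w k x) \<le> C * (\<Prod>j\<le>2*k. norm (w (x j)))" by blast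
  define K where "K = real (CARD('m2) * CARD('m2) * CARD('m1))"
  define K' where "K' = real (CARD('m2) * CARD('m1) * CARD('m2))"
  define K1 where "K1 = real (CARD('m2) * CARD('m1))"
  have K: "K \<ge> 0" "K1 \<ge> 0" "K' \<ge> 0" by (auto simp: K_def K1_def K'_def)
  show ?case
  proof (intro exI[of _ "K * K' * K1 * C"] conjI allI)
    show "0 \<le> K * K' * K1 * C" using K C by simp
    fix x
    have "norm (vprod w (Suc k) x) = norm (cadj (w (x (2 * k + 2))) ** w (x (2 * k + 1)) ** vprod w k x)"
      by simp
    also have "\<dots> \<le> K * norm (cadj (w (x (2 * k + 2))) ** w (x (2 * k + 1))) * norm (vprod w k x)"
      unfolding K_def by (rule norm_mult_crude)
    also have "\<dots> \<le> K * (K' * (K1 * norm (w (x (2 * k + 2)))) * norm (w (x (2 * k + 1)))) * (C * (\<Prod>j\<le>2*k. norm (w (x j))))"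
    proof -
      have m1: "norm (cadj (w (x (2 * k + 2))) ** w (x (2 * k + 1))) \<le> K' * norm (cadj (w (x (2 * k + 2)))) * norm (w (x (2 * k + 1)))"
        unfolding K'_def by (rule norm_mult_crude)
      have m2: "norm (cadj (w (x (2 * k + 2)))) \<le> K1 * norm (w (x (2 * k + 2)))"
        unfolding K1_def by (rule norm_cadj_crude)
      have P: "norm (cadj (w (x (2 * k + 2))) ** w (x (2 * k + 1))) \<le> K' * (K1 * norm (w (x (2 * k + 2)))) * norm (w (x (2 * k + 1)))"
        using m1 m2 K by (meson mult_left_mono mult_right_mono norm_ge_zero order_trans)
      have "0 \<le> K' * (K1 * norm (w (x (2 * k + 2)))) * norm (w (x (2 * k + 1)))" using K by simp
      then show ?thesis using P C(2)[of x] K(1)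
        by (intro mult_left_mono mult_mono) auto
    qed
    also have "\<dots> = K * K' * K1 * C * (\<Prod>j\<le>2*Suc k. norm (w (x j)))"
    proof -
      have "{..2 * Suc k} = insert (2*k+2) (insert (2*k+1) {..2*k})" by auto
      then have "(\<Prod>j\<le>2*Suc k. norm (w (x j))) = norm (w (x (2*k+2))) * (norm (w (x (2*k+1))) * (\<Prod>j\<le>2*k. norm (w (x j))))"
        by simp
      then show ?thesis by (simp add: algebra_simps)
    qed
    finally show "norm (vprod w (Suc k) x) \<le> K * K' * K1 * C * (\<Prod>j\<le>2*Suc k. norm (w (x j)))" .
  qed
qed

lemma ennreal_pow_lt_top: "(x::ennreal) < top \<Longrightarrow> x ^ n < top"
  by (induction n) (auto simp: ennreal_mult_less_top)

lemma PP_integrable_bound: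
  fixes F :: "(nat \<Rightarrow> real) \<Rightarrow> 'b::{banach,second_countable_topology}"
  assumes F: "F \<in> borel_measurable (PP k)" and h: "h \<in> borel_measurable lborel"
    and h0: "\<And>t. 0 \<le> h t" and hi: "integrable lborel h" and C: "C \<ge> 0"
    and bd: "\<And>x. x \<in> space (PP k) \<Longrightarrow> norm (F x) \<le> C * (\<Prod>j\<le>2*k. h (x j))"
  shows "integrable (PP k) F"
proof (subst integrable_iff_bounded, intro conjI F)
  have "(\<integral>\<^sup>+x. norm (F x) \<partial>PP k) \<le> (\<integral>\<^sup>+x. ennreal C * (\<Prod>j\<le>2*k. ennreal (h (x j))) \<partial>PP k)"
  proof (rule nn_integral_mono)
    fix x assume "x \<in> space (PP k)"
    then have "ennreal (norm (F x)) \<le> ennreal (C * (\<Prod>j\<le>2*k. h (x j)))"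
      using bd by (simp add: ennreal_leI)
    also have "\<dots> = ennreal C * (\<Prod>j\<le>2*k. ennreal (h (x j)))"
      using C h0 by (simp add: ennreal_mult prod_nonneg prod_ennreal)
    finally show "ennreal (norm (F x)) \<le> ennreal C * (\<Prod>j\<le>2*k. ennreal (h (x j)))" .
  qed
  also have "\<dots> = ennreal C * (\<integral>\<^sup>+x. (\<Prod>j\<le>2*k. ennreal (h (x j))) \<partial>PP k)"
    using h by (intro nn_integral_cmult borel_measurable_prod_ennreal measurable_compose[OF comp_meas[OF h]]) auto
  also have "(\<integral>\<^sup>+x. (\<Prod>j\<le>2*k. ennreal (h (x j))) \<partial>PP k) = (\<Prod>j\<le>2*k. (\<integral>\<^sup>+t. ennreal (h t) \<partial>lborel))"
    using h by (intro lbp.product_nn_integral_prod) auto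
  also have "ennreal C * (\<Prod>j\<le>2*k. (\<integral>\<^sup>+t. ennreal (h t) \<partial>lborel)) < \<infinity>"
  proof -
    have f: "(\<integral>\<^sup>+t. ennreal (h t) \<partial>lborel) < top"
      using integrableD(2)[OF hi] by (simp add: less_top)
    have "(\<Prod>j\<le>2*k. (\<integral>\<^sup>+t. ennreal (h t) \<partial>lborel)) < \<infinity>"
      using ennreal_pow_lt_top[OF f, of "Suc (2*k)"] by simp
    then show ?thesis by (simp add: ennreal_mult_less_top)
  qed
  finally show "(\<integral>\<^sup>+x. norm (F x) \<partial>PP k) < \<infinity>" by simp
qed

lemma Omega_meas[measurable]: "Measurable.pred (PP k) (\<lambda>x. x \<in> Omega k a)"
proof -
  have p1: "Measurable.pred (PP k) (\<lambda>x. 0 \<le> x (2 * k))" by (rule pred_coord) auto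
  have p2: "Measurable.pred (PP k) (\<lambda>x. x (2 * k) \<le> a)" by (rule pred_coord) auto
  have p3: "Measurable.pred (PP k) (\<lambda>x. 0 \<le> x (2 * j - 1) \<and> x (2 * j - 1) \<le> x (2 * j) \<and>
                  x (2 * j - 1) \<le> x (2 * j - 2) \<and> x (2 * j - 2) \<le> a)" if j: "j \<in> {1..k}" for j
  proof -
    from j have "2*j - 1 \<in> {..2*k}" "2*j - 2 \<in> {..2*k}" "2*j \<in> {..2*k}" by auto
    then show ?thesis by (intro pred_intros_logic pred_coord)
  qed
  have p4: "Measurable.pred (PP k) (\<lambda>x. \<forall>j\<in>{1..k}. 0 \<le> x (2 * j - 1) \<and> x (2 * j - 1) \<le> x (2 * j) \<and>
                  x (2 * j - 1) \<le> x (2 * j - 2) \<and> x (2 * j - 2) \<le> a)"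
    by (rule pred_intros_finite(3), simp, erule p3)
  show ?thesis unfolding Omega_def mem_Collect_eq by (intro pred_intros_logic p1 p2 p4)
qed

lemma ind_Omega_meas[measurable]: "(\<lambda>x. indicator (Omega k a) x :: real) \<in> borel_measurable (PP k)"
  by measurable

lemma iexp_meas[measurable]: "(\<lambda>x::real. iexp (s * x)) \<in> borel_measurable borel"
  by (intro borel_measurable_continuous_onI continuous_intros)

lemma fourier_unique_real:
  fixes r :: "real \<Rightarrow> real"
  assumes ri: "integrable lborel r"
    and z: "\<And>s. (CLINT x|lborel. iexp (s * x) * complex_of_real (r x)) = 0"
  shows "AE x in lborel. r x = 0"
proof -
  define p where "p x = max (r x) 0" for x
  define q where "q x = max (- r x) 0" for x
  have pi: "integrable lborel p" unfolding p_def by (intro integrable_max ri) simp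
  have qi: "integrable lborel q" unfolding q_def by (intro integrable_max integrable_minus ri) simp
  have p0: "\<And>x. 0 \<le> p x" and q0: "\<And>x. 0 \<le> q x" by (auto simp: p_def q_def)
  have rpq: "r x = p x - q x" for x by (auto simp: p_def q_def)
  have pm[measurable]: "p \<in> borel_measurable lborel" using pi by auto
  have qm[measurable]: "q \<in> borel_measurable lborel" using qi by auto
  have intf: "integrable lborel (\<lambda>x. f x *\<^sub>R iexp (s * x))" if "integrable lborel f" for f s
    using that by (intro Bochner_Integration.integrable_bound[OF that]) (auto simp: norm_exp_eq_Re)
  have eq: "(CLINT x|lborel. p x *\<^sub>R iexp (s * x)) = (CLINT x|lborel. q x *\<^sub>R iexp (s * x))" for s
  proof -
    have "0 = (CLINT x|lborel. iexp (s * x) * complex_of_real (r x))" using z by simp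
    also have "\<dots> = (CLINT x|lborel. p x *\<^sub>R iexp (s * x) - q x *\<^sub>R iexp (s * x))"
      by (intro Bochner_Integration.integral_cong) (auto simp: rpq scaleR_conv_of_real algebra_simps)
    also have "\<dots> = (CLINT x|lborel. p x *\<^sub>R iexp (s * x)) - (CLINT x|lborel. q x *\<^sub>R iexp (s * x))"
      by (intro Bochner_Integration.integral_diff intf pi qi)
    finally show ?thesis by simp
  qed
  have mpq: "integral\<^sup>L lborel p = integral\<^sup>L lborel q"
    using eq[of 0] by (simp add: scaleR_conv_of_real)
  define m where "m = integral\<^sup>L lborel p"
  have m0: "0 \<le> m" unfolding m_def using p0 by simp
  show ?thesis
  proof (cases "m = 0")
    case True
    have "AE x in lborel. p x = 0"
      using True p0 pi integral_nonneg_eq_0_iff_AE[OF pi] unfolding m_def by simp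
    moreover have "AE x in lborel. q x = 0"
      using True q0 qi integral_nonneg_eq_0_iff_AE[OF qi] mpq unfolding m_def by simp
    ultimately show ?thesis by eventually_elim (simp add: rpq)
  next
    case False
    then have mpos: "m > 0" using m0 by simp
    define M1 where "M1 = density lborel (\<lambda>x. ennreal (p x / m))"
    define M2 where "M2 = density lborel (\<lambda>x. ennreal (q x / m))"
    have rd: "real_distribution (density lborel (\<lambda>x. ennreal (f x / m)))"
      if fi: "integrable lborel f" and f0: "\<And>x. 0 \<le> f x" and fm: "integral\<^sup>L lborel f = m" for f
    proof -
      have [measurable]: "f \<in> borel_measurable lborel" using fi by auto
      have "emeasure (density lborel (\<lambda>x. ennreal (f x / m))) (space (density lborel (\<lambda>x. ennreal (f x / m))))
          = (\<integral>\<^sup>+x. ennreal (f x / m) \<partial>lborel)"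
        by (simp add: emeasure_density)
      also have "\<dots> = ennreal (integral\<^sup>L lborel (\<lambda>x. f x / m))"
        using fi f0 m0 by (intro nn_integral_eq_integral) auto
      also have "integral\<^sup>L lborel (\<lambda>x. f x / m) = 1"
        using fm mpos by simp
      finally have "prob_space (density lborel (\<lambda>x. ennreal (f x / m)))"
        by (intro prob_spaceI) simp
      then show ?thesis
        by (simp add: real_distribution_def real_distribution_axioms_def)
    qed
    have rd1: "real_distribution M1" unfolding M1_def by (rule rd[OF pi p0]) (simp add: m_def)
    have rd2: "real_distribution M2" unfolding M2_def by (rule rd[OF qi q0]) (simp add: m_def mpq)
    have ch: "char (density lborel (\<lambda>x. ennreal (f x / m))) s = (1 / m) *\<^sub>R (CLINT x|lborel. f x *\<^sub>R iexp (s * x))"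
      if fi: "integrable lborel f" and f0: "\<And>x. 0 \<le> f x" for f s
    proof -
      have [measurable]: "f \<in> borel_measurable lborel" using fi by auto
      have "char (density lborel (\<lambda>x. ennreal (f x / m))) s = (CLINT x|lborel. (f x / m) *\<^sub>R iexp (s * x))"
        unfolding char_def using f0 m0 by (subst integral_density) auto
      also have "\<dots> = (CLINT x|lborel. (1 / m) *\<^sub>R (f x *\<^sub>R iexp (s * x)))"
        by (simp add: field_simps)
      also have "\<dots> = (1 / m) *\<^sub>R (CLINT x|lborel. f x *\<^sub>R iexp (s * x))"
        by (rule integral_scaleR_right)
      finally show ?thesis .
    qed
    have "char M1 = char M2"
      unfolding M1_def M2_def by (rule ext) (simp only: ch[OF pi p0] ch[OF qi q0] eq)
    then have "M1 = M2" by (rule Levy_uniqueness[OF rd1 rd2])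
    then have "AE x in lborel. ennreal (p x / m) = ennreal (q x / m)"
      unfolding M1_def M2_def by (intro sigma_finite_measure.density_unique[OF sigma_finite_lborel]) auto
    then show ?thesis
    proof eventually_elim
      case (elim x)
      then have "p x / m = q x / m" using p0[of x] q0[of x] mpos by (simp add: ennreal_inj)
      then show ?case using mpos by (simp add: rpq)
    qed
  qed
qed

lemma im_cnj: "complex_of_real (Im w) = (w - cnj w) / (2 * \<i>)"
proof -
  have "w - cnj w = 2 * \<i> * complex_of_real (Im w)" by (simp add: complex_eq_iff)
  then show ?thesis by simp
qed

lemma fourier_unique:
  fixes u :: "real \<Rightarrow> complex"
  assumes ui: "integrable lborel u"
    and z: "\<And>s. (CLINT x|lborel. iexp (s * x) * u x) = 0"
  shows "AE x in lborel. u x = 0"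
proof -
  have um[measurable]: "u \<in> borel_measurable lborel" using ui by auto
  have intf: "integrable lborel (\<lambda>x. iexp (s * x) * f x)" if "integrable lborel f" for f :: "real \<Rightarrow> complex" and s
    using that by (intro Bochner_Integration.integrable_bound[OF that]) (auto simp: norm_exp_eq_Re norm_mult)
  have zc: "(CLINT x|lborel. iexp (s * x) * cnj (u x)) = 0" for s
  proof -
    have "(CLINT x|lborel. iexp (s * x) * cnj (u x)) = (CLINT x|lborel. cnj (iexp (-s * x) * u x))"
      by (intro Bochner_Integration.integral_cong) (auto simp: exp_cnj)
    also have "\<dots> = cnj (CLINT x|lborel. iexp (-s * x) * u x)" by (rule Bochner_Integration.integral_cnj)
    finally show ?thesis using z[of "-s"] by simp
  qed
  have cui: "integrable lborel (\<lambda>x. cnj (u x))" using ui by simp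
  have re: "AE x in lborel. Re (u x) = 0"
  proof (rule fourier_unique_real)
    show "integrable lborel (\<lambda>x. Re (u x))" using ui by simp
    fix s
    have "(CLINT x|lborel. iexp (s * x) * complex_of_real (Re (u x)))
        = (CLINT x|lborel. (iexp (s * x) * u x + iexp (s * x) * cnj (u x)) / 2)"
      by (intro Bochner_Integration.integral_cong) (auto simp: complex_eq_iff algebra_simps)
    also have "\<dots> = ((CLINT x|lborel. iexp (s * x) * u x) + (CLINT x|lborel. iexp (s * x) * cnj (u x))) / 2"
      using intf[OF ui, of s] intf[OF cui, of s] by simp
    finally show "(CLINT x|lborel. iexp (s * x) * complex_of_real (Re (u x))) = 0"
      using z[of s] zc[of s] by simp
  qed
  have im: "AE x in lborel. Im (u x) = 0"
  proof (rule fourier_unique_real)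
    show "integrable lborel (\<lambda>x. Im (u x))" using ui by simp
    fix s
    have "(CLINT x|lborel. iexp (s * x) * complex_of_real (Im (u x)))
        = (CLINT x|lborel. (iexp (s * x) * u x - iexp (s * x) * cnj (u x)) / (2 * \<i>))"
      by (intro Bochner_Integration.integral_cong refl) (simp only: im_cnj times_divide_eq_right right_diff_distrib)
    also have "\<dots> = ((CLINT x|lborel. iexp (s * x) * u x) - (CLINT x|lborel. iexp (s * x) * cnj (u x))) / (2 * \<i>)"
      using intf[OF ui, of s] intf[OF cui, of s] by simp
    finally show "(CLINT x|lborel. iexp (s * x) * complex_of_real (Im (u x))) = 0"
      using z[of s] zc[of s] by simp
  qed
  from re im show ?thesis by eventually_elim (simp add: complex_eq_iff)
qed

lemma E_bound: "0 \<le> \<alpha> \<Longrightarrow> 0 \<le> Im z \<Longrightarrow> cmod (exp (2 * \<i> * z * complex_of_real \<alpha>)) \<le> 1"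
  by (simp add: norm_exp_eq_Re mult_nonneg_nonneg)

lemma E_meas[measurable]: "(\<lambda>\<alpha>::real. exp (2 * \<i> * z * complex_of_real \<alpha>)) \<in> borel_measurable borel"
  by (intro borel_measurable_continuous_onI continuous_intros)

lemma smat_cont: "continuous_on UNIV (\<lambda>p. smat (fst p) (snd p :: complex^'n^'m))"
  unfolding smat_def by (intro continuous_intros)

lemma smat_meas[measurable]: "e \<in> borel_measurable M \<Longrightarrow> f \<in> borel_measurable M \<Longrightarrow>
   (\<lambda>x. smat (e x) (f x :: complex^'n^'m)) \<in> borel_measurable M"
  by (rule borel_measurable_continuous_Pair[OF _ _ smat_cont])

lemma smat_E_integrable:
  fixes F :: "real \<Rightarrow> complex^'n^'m"
  assumes F: "integrable lborel F" and F0: "\<And>\<alpha>. \<alpha> < 0 \<Longrightarrow> F \<alpha> = 0" and z: "0 \<le> Im z"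
  shows "integrable lborel (\<lambda>\<alpha>. smat (exp (2 * \<i> * z * complex_of_real \<alpha>)) (F \<alpha>))"
proof (rule Bochner_Integration.integrable_bound[OF F])
  have [measurable]: "F \<in> borel_measurable lborel" using F by auto
  show "(\<lambda>\<alpha>. smat (exp (2 * \<i> * z * complex_of_real \<alpha>)) (F \<alpha>)) \<in> borel_measurable lborel"
    by measurable
  show "AE \<alpha> in lborel. norm (smat (exp (2 * \<i> * z * complex_of_real \<alpha>)) (F \<alpha>)) \<le> norm (F \<alpha>)"
  proof (rule AE_I2)
    fix \<alpha> :: real
    show "norm (smat (exp (2 * \<i> * z * complex_of_real \<alpha>)) (F \<alpha>)) \<le> norm (F \<alpha>)"
    proof (cases "\<alpha> < 0")
      case True then show ?thesis by (simp add: F0)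
    next
      case False
      then have "cmod (exp (2 * \<i> * z * complex_of_real \<alpha>)) \<le> 1" using z by (intro E_bound) auto
      then show ?thesis unfolding norm_smat by (simp add: mult_left_le_one_le)
    qed
  qed
qed

lemma upper_to_real:
  fixes u :: "real \<Rightarrow> complex"
  assumes ui: "integrable lborel u" and u0: "\<And>x. x < 0 \<Longrightarrow> u x = 0"
    and z: "\<And>z. Im z > 0 \<Longrightarrow> (CLINT x|lborel. exp (2 * \<i> * z * complex_of_real x) * u x) = 0"
  shows "(CLINT x|lborel. iexp (s * x) * u x) = 0"
proof -
  have [measurable]: "u \<in> borel_measurable lborel" using ui by auto
  define zn where "zn n = complex_of_real (s / 2) + \<i> * complex_of_real (inverse (real (Suc n)))" for n
  have Imzn: "Im (zn n) > 0" for n by (simp add: zn_def)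
  have "(\<lambda>n. CLINT x|lborel. exp (2 * \<i> * zn n * complex_of_real x) * u x) \<longlonglongrightarrow> (CLINT x|lborel. iexp (s * x) * u x)"
  proof (rule integral_dominated_convergence[where w="\<lambda>x. norm (u x)"])
    show "(\<lambda>x. iexp (s * x) * u x) \<in> borel_measurable lborel" by measurable
    show "(\<lambda>x. exp (2 * \<i> * zn n * complex_of_real x) * u x) \<in> borel_measurable lborel" for n
      by measurable
    show "integrable lborel (\<lambda>x. norm (u x))" using ui by simp
    show "AE x in lborel. (\<lambda>n. exp (2 * \<i> * zn n * complex_of_real x) * u x) \<longlonglongrightarrow> iexp (s * x) * u x"
    proof (rule AE_I2)
      fix x :: real
      have "(\<lambda>n. zn n) \<longlonglongrightarrow> complex_of_real (s / 2) + \<i> * complex_of_real 0"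
        unfolding zn_def by (intro tendsto_intros LIMSEQ_inverse_real_of_nat)
      then have "(\<lambda>n. exp (2 * \<i> * zn n * complex_of_real x) * u x) \<longlonglongrightarrow>
          exp (2 * \<i> * (complex_of_real (s / 2) + \<i> * complex_of_real 0) * complex_of_real x) * u x"
        by (intro tendsto_intros)
      moreover have "2 * \<i> * (complex_of_real (s / 2) + \<i> * complex_of_real 0) * complex_of_real x = \<i> * complex_of_real (s * x)"
        by simp
      ultimately show "(\<lambda>n. exp (2 * \<i> * zn n * complex_of_real x) * u x) \<longlonglongrightarrow> iexp (s * x) * u x"
        by (simp add: mult.assoc)
    qed
    fix n
    show "AE x in lborel. norm (exp (2 * \<i> * zn n * complex_of_real x) * u x) \<le> norm (u x)"
    proof (rule AE_I2)
      fix x :: real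
      show "norm (exp (2 * \<i> * zn n * complex_of_real x) * u x) \<le> norm (u x)"
      proof (cases "x < 0")
        case True then show ?thesis by (simp add: u0)
      next
        case False
        then have "cmod (exp (2 * \<i> * zn n * complex_of_real x)) \<le> 1"
          using Imzn[of n] by (intro E_bound) auto
        then show ?thesis unfolding norm_mult by (simp add: mult_left_le_one_le)
      qed
    qed
  qed
  moreover have "(CLINT x|lborel. exp (2 * \<i> * zn n * complex_of_real x) * u x) = 0" for n
    using z[OF Imzn[of n]] .
  ultimately have "(\<lambda>n. 0) \<longlonglongrightarrow> (CLINT x|lborel. iexp (s * x) * u x)" by simp
  then show ?thesis by (simp add: LIMSEQ_const_iff)
qed

lemma represents_unique:
  fixes A B :: "real \<Rightarrow> complex^'m1^'m2"
  assumes A: "represents k a v A" and B: "represents k a v B"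
  shows "AE \<alpha> in lborel. \<alpha> \<in> {0<..<real (k + 1) * a} \<longrightarrow> B \<alpha> = A \<alpha>"
proof -
  define S where "S = {0<..<real (k + 1) * a}"
  define IA where "IA \<alpha> = indicator S \<alpha> *\<^sub>R A \<alpha>" for \<alpha>
  define IB where "IB \<alpha> = indicator S \<alpha> *\<^sub>R B \<alpha>" for \<alpha>
  define h where "h \<alpha> = IB \<alpha> - IA \<alpha>" for \<alpha>
  have IAi: "integrable lborel IA" using A unfolding represents_def set_integrable_def IA_def S_def by simp
  have IBi: "integrable lborel IB" using B unfolding represents_def set_integrable_def IB_def S_def by simp
  have hi: "integrable lborel h" unfolding h_def using IAi IBi by simp
  have IA0: "IA \<alpha> = 0" if "\<alpha> < 0" for \<alpha> using that by (simp add: IA_def S_def)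
  have IB0: "IB \<alpha> = 0" if "\<alpha> < 0" for \<alpha> using that by (simp add: IB_def S_def)
  have h0: "h \<alpha> = 0" if "\<alpha> < 0" for \<alpha> using that by (simp add: h_def IA0 IB0)
  have key: "(LINT \<alpha>|lborel. smat (exp (2 * \<i> * z * complex_of_real \<alpha>)) (h \<alpha>)) = 0" if z: "Im z > 0" for z
  proof -
    let ?E = "\<lambda>\<alpha>. exp (2 * \<i> * z * complex_of_real \<alpha>)"
    have MA: "Modd k a v z = (LINT \<alpha>|lborel. smat (?E \<alpha>) (IA \<alpha>))"
      using A z unfolding represents_def set_lebesgue_integral_def IA_def S_def by (simp add: smat_scaleR)
    have MB: "Modd k a v z = (LINT \<alpha>|lborel. smat (?E \<alpha>) (IB \<alpha>))"
      using B z unfolding represents_def set_lebesgue_integral_def IB_def S_def by (simp add: smat_scaleR)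
    have "(LINT \<alpha>|lborel. smat (?E \<alpha>) (h \<alpha>)) = (LINT \<alpha>|lborel. smat (?E \<alpha>) (IB \<alpha>) - smat (?E \<alpha>) (IA \<alpha>))"
      unfolding h_def smat_diff ..
    also have "\<dots> = (LINT \<alpha>|lborel. smat (?E \<alpha>) (IB \<alpha>)) - (LINT \<alpha>|lborel. smat (?E \<alpha>) (IA \<alpha>))"
      using z by (intro Bochner_Integration.integral_diff smat_E_integrable IAi IBi IA0 IB0) auto
    finally show ?thesis using MA MB by simp
  qed
  have ent: "AE \<alpha> in lborel. h \<alpha> $ i $ j = 0" for i j
  proof (rule fourier_unique)
    show ui: "integrable lborel (\<lambda>\<alpha>. h \<alpha> $ i $ j)" by (rule integrable_bounded_linear[OF bl_entry hi])
    fix s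
    show "(CLINT x|lborel. iexp (s * x) * h x $ i $ j) = 0"
    proof (rule upper_to_real[OF ui])
      show "\<And>x. x < 0 \<Longrightarrow> h x $ i $ j = 0" by (simp add: h0)
      fix z :: complex assume z: "Im z > 0"
      have "(CLINT x|lborel. exp (2 * \<i> * z * complex_of_real x) * h x $ i $ j)
          = (CLINT x|lborel. smat (exp (2 * \<i> * z * complex_of_real x)) (h x) $ i $ j)"
        by (simp add: smat_def)
      also have "\<dots> = (LINT x|lborel. smat (exp (2 * \<i> * z * complex_of_real x)) (h x)) $ i $ j"
        using z by (intro integral_bounded_linear[OF bl_entry] smat_E_integrable hi h0) auto
      also have "\<dots> = 0" using key[OF z] by simp
      finally show "(CLINT x|lborel. exp (2 * \<i> * z * complex_of_real x) * h x $ i $ j) = 0" .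
    qed
  qed
  have "AE \<alpha> in lborel. \<forall>i\<in>UNIV. \<forall>j\<in>UNIV. h \<alpha> $ i $ j = 0"
    by (intro AE_finite_allI ent) auto
  then show ?thesis
  proof eventually_elim
    case (elim \<alpha>)
    then have "h \<alpha> = 0" by (simp add: vec_eq_iff)
    then have e: "IB \<alpha> = IA \<alpha>" by (simp add: h_def)
    show ?case
    proof
      assume "\<alpha> \<in> {0<..<real (k + 1) * a}"
      then have "indicator S \<alpha> = (1::real)" by (simp add: S_def)
      with e show "B \<alpha> = A \<alpha>" by (simp add: IA_def IB_def)
    qed
  qed
qed

lemma Omega_Suc_D:
  assumes "x \<in> Omega (Suc k) a"
  shows "x \<in> Omega k a" "0 \<le> x (2*k+1)" "x (2*k+1) \<le> x (2*k+2)" "x (2*k+1) \<le> x (2*k)" "x (2*k+2) \<le> a"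
proof -
  have top: "0 \<le> x (2*k+2)" "x (2*k+2) \<le> a" using assms by (auto simp: Omega_def)
  have all: "\<And>j. j \<in> {1..Suc k} \<Longrightarrow> 0 \<le> x (2 * j - 1) \<and> x (2 * j - 1) \<le> x (2 * j) \<and>
                  x (2 * j - 1) \<le> x (2 * j - 2) \<and> x (2 * j - 2) \<le> a"
    using assms unfolding Omega_def by blast
  from all[of "Suc k"] have last: "0 \<le> x (2*k+1)" "x (2*k+1) \<le> x (2*k+2)" "x (2*k+1) \<le> x (2*k)" "x (2*k) \<le> a"
    by auto
  then show "0 \<le> x (2*k+1)" "x (2*k+1) \<le> x (2*k+2)" "x (2*k+1) \<le> x (2*k)" "x (2*k+2) \<le> a"
    using top by auto
  show "x \<in> Omega k a"
    unfolding Omega_def using all last by auto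
qed

lemma alt_Suc: "alt (Suc k) x = alt k x - x (2*k+1) + x (2*k+2)"
proof -
  have "{..2 * Suc k} = insert (2*k+2) (insert (2*k+1) {..2*k})" by auto
  then show ?thesis unfolding alt_def by simp
qed

lemma Omega_props:
  assumes "x \<in> Omega k a"
  shows "0 \<le> alt k x \<and> alt k x \<le> real (k+1) * a \<and> (\<forall>j\<le>2*k. 0 \<le> x j \<and> x j \<le> a)"
  using assms
proof (induction k)
  case 0
  then show ?case by (simp add: Omega_def alt_def)
next
  case (Suc k)
  note D = Omega_Suc_D[OF Suc.prems]
  from Suc.IH[OF D(1)] have IH: "0 \<le> alt k x" "alt k x \<le> real (k+1) * a" "\<forall>j\<le>2*k. 0 \<le> x j \<and> x j \<le> a"
    by auto
  have "\<forall>j\<le>2*Suc k. 0 \<le> x j \<and> x j \<le> a"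
  proof (intro allI impI)
    fix j assume "j \<le> 2 * Suc k"
    show "0 \<le> x j \<and> x j \<le> a"
    proof (cases "j \<le> 2*k")
      case True then show ?thesis using IH(3) by auto
    next
      case False
      then have "j = 2*k+1 \<or> j = 2*k+2" using \<open>j \<le> 2 * Suc k\<close> by presburger
      then show ?thesis using D by auto
    qed
  qed
  moreover have "0 \<le> alt (Suc k) x" "alt (Suc k) x \<le> real (Suc k + 1) * a"
    using IH D by (auto simp: alt_Suc algebra_simps)
  ultimately show ?case by blast
qed

lemma PP_fubini:
  fixes F :: "(nat \<Rightarrow> real) \<Rightarrow> 'b::{banach,second_countable_topology}"
  assumes F: "integrable (PP k) F"
  shows "integral\<^sup>L (PP k) F = (LINT \<alpha>|lborel. LINT y|NN k. F (Phi k (\<alpha>, y)))"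
    and "integrable lborel (\<lambda>\<alpha>. LINT y|NN k. F (Phi k (\<alpha>, y)))"
    and "AE \<alpha> in lborel. integrable (NN k) (\<lambda>y. F (Phi k (\<alpha>, y)))"
proof -
  have Fm: "F \<in> borel_measurable (PP k)" using F by auto
  have I2: "integrable (lborel \<Otimes>\<^sub>M NN k) (\<lambda>p. F (Phi k p))"
    using F integrable_distr_eq[OF Phi_meas Fm] by (simp add: distr_Phi)
  have "integral\<^sup>L (PP k) F = integral\<^sup>L (distr (lborel \<Otimes>\<^sub>M NN k) (PP k) (Phi k)) F"
    by (simp add: distr_Phi)
  also have "\<dots> = integral\<^sup>L (lborel \<Otimes>\<^sub>M NN k) (\<lambda>p. F (Phi k p))"
    by (rule integral_distr[OF Phi_meas Fm])
  also have "\<dots> = (LINT \<alpha>|lborel. LINT y|NN k. F (Phi k (\<alpha>, y)))"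
    by (rule pair_sigma_finite.integral_fst'[OF psf I2, symmetric])
  finally show "integral\<^sup>L (PP k) F = (LINT \<alpha>|lborel. LINT y|NN k. F (Phi k (\<alpha>, y)))" .
  show "integrable lborel (\<lambda>\<alpha>. LINT y|NN k. F (Phi k (\<alpha>, y)))"
    using pair_sigma_finite.integrable_fst'[OF psf I2] by simp
  show "AE \<alpha> in lborel. integrable (NN k) (\<lambda>y. F (Phi k (\<alpha>, y)))"
    using pair_sigma_finite.AE_integrable_fst'[OF psf I2] by simp
qed

definition gf :: "real \<Rightarrow> (real \<Rightarrow> complex^'m2^'m1) \<Rightarrow> nat \<Rightarrow> (nat \<Rightarrow> real) \<Rightarrow> complex^'m1^'m2" where
  "gf a w k x = indicator (Omega k a) x *\<^sub>R vprod w k x"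

definition Gf :: "real \<Rightarrow> (real \<Rightarrow> complex^'m2^'m1) \<Rightarrow> nat \<Rightarrow> real \<Rightarrow> complex^'m1^'m2" where
  "Gf a w k \<alpha> = (LINT y|NN k. gf a w k (Phi k (\<alpha>, y)))"

definition cst :: "nat \<Rightarrow> complex" where "cst k = (-1) ^ (k + 1) * \<i>"

definition Acon :: "real \<Rightarrow> (real \<Rightarrow> complex^'m2^'m1) \<Rightarrow> nat \<Rightarrow> real \<Rightarrow> complex^'m1^'m2" where
  "Acon a w k \<alpha> = indicator {0<..<real (k + 1) * a} \<alpha> *\<^sub>R smat (cst k) (Gf a w k \<alpha>)"

lemma cmod_cst[simp]: "cmod (cst k) = 1"
  by (simp add: cst_def norm_mult norm_power)

lemma cst_nz[simp]: "cst k \<noteq> 0"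
  using cmod_cst[of k] by (metis norm_zero zero_neq_one)

lemma gf_meas:
  assumes wm: "w \<in> borel_measurable lborel"
  shows "gf a w k \<in> borel_measurable (PP k)"
  unfolding gf_def by (intro borel_measurable_scaleR ind_Omega_meas vprod_meas[OF wm]) auto

lemma gf_integrable:
  assumes wm: "w \<in> borel_measurable lborel" and wi: "integrable lborel (\<lambda>t. norm (w t))"
  shows "integrable (PP k) (gf a w k)"
proof -
  obtain C where C: "C \<ge> 0" "\<And>x. norm (vprod w k x) \<le> C * (\<Prod>j\<le>2*k. norm (w (x j)))"
    using vprod_norm_bound by blast
  show ?thesis
  proof (rule PP_integrable_bound[OF gf_meas[OF wm] _ _ wi C(1)])
    show "(\<lambda>t. norm (w t)) \<in> borel_measurable lborel" using wm by simp
    show "\<And>t. 0 \<le> norm (w t)" by simp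
    fix x
    have "norm (gf a w k x) \<le> norm (vprod w k x)"
      by (simp add: gf_def indicator_def)
    then show "norm (gf a w k x) \<le> C * (\<Prod>j\<le>2*k. norm (w (x j)))" using C(2)[of x] by linarith
  qed
qed

lemma gf_Phi_zero:
  assumes "\<alpha> \<notin> {0..real (k + 1) * a}"
  shows "gf a w k (Phi k (\<alpha>, y)) = 0"
proof -
  have "Phi k (\<alpha>, y) \<notin> Omega k a"
    using Omega_props[of "Phi k (\<alpha>, y)" k a] assms by (auto simp: alt_Phi)
  then show ?thesis by (simp add: gf_def)
qed

lemma Gf_zero: "\<alpha> \<notin> {0..real (k + 1) * a} \<Longrightarrow> Gf a w k \<alpha> = 0"
  unfolding Gf_def by (simp add: gf_Phi_zero)

lemma vprod_cong: "(\<And>j. j \<le> 2*k \<Longrightarrow> v (x j) = w (x j)) \<Longrightarrow> vprod v k x = vprod w k x"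
  by (induction k) auto

lemma alt_meas[measurable]: "alt k \<in> borel_measurable (PP k)"
  unfolding alt_def by (intro borel_measurable_sum borel_measurable_times borel_measurable_const coord_meas) auto

lemma Gf_integrable:
  assumes wm: "w \<in> borel_measurable lborel" and wi: "integrable lborel (\<lambda>t. norm (w t))"
  shows "integrable lborel (Gf a w k)"
  using PP_fubini(2)[OF gf_integrable[OF wm wi]] unfolding Gf_def .

lemma represents_con:
  assumes wm: "w \<in> borel_measurable lborel" and wi: "integrable lborel (\<lambda>t. norm (w t))"
    and vw: "\<And>t. t \<in> {0..a} \<Longrightarrow> v t = w t"
  shows "represents k a v (Acon a w k)"
  unfolding represents_def
proof (intro conjI allI impI)
  define S where "S = {0<..<real (k + 1) * a}"
  have Gi: "integrable lborel (Gf a w k)" by (rule Gf_integrable[OF wm wi])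
  have Si: "integrable lborel (\<lambda>\<alpha>. indicator S \<alpha> *\<^sub>R smat (cst k) (Gf a w k \<alpha>))"
    by (intro integrable_mult_indicator integrable_bounded_linear[OF bl_smat Gi]) (auto simp: S_def)
  show "set_integrable lborel {0<..<real (k + 1) * a} (Acon a w k)"
  proof -
    have "(\<lambda>\<alpha>. indicator {0<..<real (k + 1) * a} \<alpha> *\<^sub>R Acon a w k \<alpha>) =
        (\<lambda>\<alpha>. indicator S \<alpha> *\<^sub>R smat (cst k) (Gf a w k \<alpha>))"
      by (auto simp: Acon_def S_def indicator_def fun_eq_iff)
    then show ?thesis unfolding set_integrable_def using Si by simp
  qed
  fix z :: complex assume z: "0 < Im z"
  let ?E = "\<lambda>\<alpha>. exp (2 * \<i> * z * complex_of_real \<alpha>)"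
  define Fz where "Fz x = smat (?E (alt k x)) (gf a w k x)" for x
  have gi: "integrable (PP k) (gf a w k)" by (rule gf_integrable[OF wm wi])
  have Fzi: "integrable (PP k) Fz"
  proof (rule Bochner_Integration.integrable_bound[OF gi])
    show "Fz \<in> borel_measurable (PP k)"
      unfolding Fz_def by (intro smat_meas gf_meas[OF wm] measurable_compose[OF alt_meas E_meas])
    show "AE x in PP k. norm (Fz x) \<le> norm (gf a w k x)"
    proof (rule AE_I2)
      fix x
      show "norm (Fz x) \<le> norm (gf a w k x)"
      proof (cases "x \<in> Omega k a")
        case True
        then have "cmod (?E (alt k x)) \<le> 1" using Omega_props[OF True] z by (intro E_bound) auto
        then show ?thesis unfolding Fz_def norm_smat by (simp add: mult_left_le_one_le)
      next
        case False then show ?thesis by (simp add: Fz_def gf_def)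
      qed
    qed
  qed
  have integrand: "indicator (Omega k a) x *\<^sub>R smat (?E (alt k x)) (vprod v k x) = Fz x" for x
  proof (cases "x \<in> Omega k a")
    case True
    then have "vprod v k x = vprod w k x"
      using Omega_props[OF True] by (intro vprod_cong vw) auto
    then show ?thesis by (simp add: Fz_def gf_def smat_scaleR True)
  next
    case False then show ?thesis by (simp add: Fz_def gf_def)
  qed
  have "Modd k a v z = smat (cst k) (integral\<^sup>L (PP k) Fz)"
    unfolding Modd_def cst_def[symmetric] integrand ..
  also have "integral\<^sup>L (PP k) Fz = (LINT \<alpha>|lborel. LINT y|NN k. Fz (Phi k (\<alpha>, y)))"
    by (rule PP_fubini(1)[OF Fzi])
  also have "\<dots> = (LINT \<alpha>|lborel. smat (?E \<alpha>) (Gf a w k \<alpha>))"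
  proof (rule Bochner_Integration.integral_cong[OF refl])
    fix \<alpha> :: real
    have "(LINT y|NN k. Fz (Phi k (\<alpha>, y))) = (LINT y|NN k. smat (?E \<alpha>) (gf a w k (Phi k (\<alpha>, y))))"
      by (simp add: Fz_def alt_Phi)
    also have "\<dots> = smat (?E \<alpha>) (Gf a w k \<alpha>)"
      unfolding Gf_def
      by (rule integral_bounded_linear'[OF bl_smat bl_smat[of "1 / ?E \<alpha>"]]) (simp add: smat_smat)
    finally show "(LINT y|NN k. Fz (Phi k (\<alpha>, y))) = smat (?E \<alpha>) (Gf a w k \<alpha>)" .
  qed
  also have "smat (cst k) (LINT \<alpha>|lborel. smat (?E \<alpha>) (Gf a w k \<alpha>)) =
      (LINT \<alpha>|lborel. smat (cst k) (smat (?E \<alpha>) (Gf a w k \<alpha>)))"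
    by (rule integral_bounded_linear'[OF bl_smat bl_smat[of "1 / cst k"], symmetric]) (simp add: smat_smat)
  also have "\<dots> = (LINT \<alpha>|lborel. indicator S \<alpha> *\<^sub>R smat (?E \<alpha>) (Acon a w k \<alpha>))"
  proof (rule integral_cong_AE)
    show "(\<lambda>\<alpha>. smat (cst k) (smat (?E \<alpha>) (Gf a w k \<alpha>))) \<in> borel_measurable lborel"
      using Gi by (intro smat_meas borel_measurable_const) auto
    show "(\<lambda>\<alpha>. indicator S \<alpha> *\<^sub>R smat (?E \<alpha>) (Acon a w k \<alpha>)) \<in> borel_measurable lborel"
      using Gi unfolding Acon_def S_def
      by (intro borel_measurable_scaleR smat_meas borel_measurable_indicator) auto
    have "AE \<alpha> in lborel. \<alpha> \<noteq> 0" by (rule AE_lborel_singleton)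
    moreover have "AE \<alpha> in lborel. \<alpha> \<noteq> real (k + 1) * a" by (rule AE_lborel_singleton)
    ultimately show "AE \<alpha> in lborel. smat (cst k) (smat (?E \<alpha>) (Gf a w k \<alpha>)) =
        indicator S \<alpha> *\<^sub>R smat (?E \<alpha>) (Acon a w k \<alpha>)"
    proof eventually_elim
      case (elim \<alpha>)
      show ?case
      proof (cases "\<alpha> \<in> S")
        case True
        then show ?thesis by (simp add: Acon_def S_def smat_smat mult.commute)
      next
        case False
        then have "\<alpha> \<notin> {0..real (k + 1) * a}" using elim by (auto simp: S_def)
        then show ?thesis using False by (simp add: Gf_zero Acon_def S_def)
      qed
    qed
  qed
  finally show "Modd k a v z = set_lebesgue_integral lborel {0<..<real (k + 1) * a}
                         (\<lambda>\<alpha>. smat (exp (2 * \<i> * z * complex_of_real \<alpha>)) (Acon a w k \<alpha>))"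
    unfolding set_lebesgue_integral_def S_def .
qed

lemma opnorm_zero[simp]: "opnorm (0::complex^'n^'m) = 0"
proof -
  have "((*v) (0::complex^'n^'m)) = (\<lambda>x. 0)"
    by (simp add: fun_eq_iff vec_eq_iff matrix_vector_mult_def)
  then show ?thesis unfolding opnorm_def by (simp add: onorm_zero)
qed

lemma scaleR_mv: "(r *\<^sub>R (M::complex^'n^'m)) *v u = r *\<^sub>R (M *v u)"
  by (simp add: vec_eq_iff matrix_vector_mult_def scaleR_sum_right)

lemma zero_mv[simp]: "(0::complex^'n^'m) *v u = 0"
  by (simp add: vec_eq_iff matrix_vector_mult_def)

lemma scaleR_entry: "(r *\<^sub>R (M::complex^'n^'m)) $ i $ j = complex_of_real r * M $ i $ j"
  unfolding vector_scaleR_component by (simp add: scaleR_conv_of_real)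

lemma vprod_opbound:
  assumes wb: "\<And>t. opnorm (w t) \<le> c" and c: "0 \<le> c"
  shows "norm (vprod w k x *v u) \<le> c ^ (2*k+1) * norm u"
proof (induction k arbitrary: u)
  case 0
  have "norm (vprod w 0 x *v u) \<le> opnorm (cadj (w (x 0))) * norm u" by (simp add: opnorm_le)
  also have "\<dots> \<le> c * norm u"
    using opnorm_cadj[of "w (x 0)"] wb[of "x 0"] by (intro mult_right_mono) auto
  finally show ?case by simp
next
  case (Suc k)
  have "vprod w (Suc k) x *v u = cadj (w (x (2*k+2))) *v (w (x (2*k+1)) *v (vprod w k x *v u))"
    by (simp add: matrix_vector_mul_assoc matrix_mul_assoc)
  then have "norm (vprod w (Suc k) x *v u) \<le> opnorm (cadj (w (x (2*k+2)))) * norm (w (x (2*k+1)) *v (vprod w k x *v u))"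
    by (simp add: opnorm_le)
  also have "\<dots> \<le> c * (c * (c ^ (2*k+1) * norm u))"
  proof (intro mult_mono)
    show "opnorm (cadj (w (x (2*k+2)))) \<le> c" using opnorm_cadj wb order_trans by blast
    have "norm (w (x (2*k+1)) *v (vprod w k x *v u)) \<le> opnorm (w (x (2*k+1))) * norm (vprod w k x *v u)"
      by (rule opnorm_le)
    also have "\<dots> \<le> c * (c ^ (2*k+1) * norm u)"
      using Suc.IH[of u] wb c by (intro mult_mono) (auto simp: opnorm_nonneg)
    finally show "norm (w (x (2*k+1)) *v (vprod w k x *v u)) \<le> c * (c ^ (2*k+1) * norm u)" .
  qed (use c in auto)
  also have "\<dots> = c ^ (2 * Suc k + 1) * norm u" by (simp add: algebra_simps)
  finally show ?case .
qed

lemma Acon_opbound: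
  fixes w :: "real \<Rightarrow> complex^'m2^'m1"
  assumes wm: "w \<in> borel_measurable lborel" and wb: "\<And>t. opnorm (w t) \<le> c" and c: "0 \<le> c"
    and sl: "integrable (NN k) (\<lambda>y. indicator (Omega k a) (Phi k (\<alpha>, y)) :: real)"
  shows "opnorm (Acon a w k \<alpha>) \<le> c ^ (2*k+1) *
     (indicator {0<..<real (k + 1) * a} \<alpha> * (LINT y|NN k. indicator (Omega k a) (Phi k (\<alpha>, y))))"
proof -
  define S where "S = {0<..<real (k + 1) * a}"
  define d where "d = (LINT y|NN k. indicator (Omega k a) (Phi k (\<alpha>, y)) :: real)"
  have d0: "0 \<le> d" unfolding d_def by simp
  have Gb: "norm (Gf a w k \<alpha> *v u) \<le> c ^ (2*k+1) * d * norm u" for u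
  proof (cases "integrable (NN k) (\<lambda>y. gf a w k (Phi k (\<alpha>, y)))")
    case True
    have "Gf a w k \<alpha> *v u = (LINT y|NN k. gf a w k (Phi k (\<alpha>, y)) *v u)"
      unfolding Gf_def by (rule integral_bounded_linear[OF bl_mv_left True, symmetric])
    then have "norm (Gf a w k \<alpha> *v u) \<le> (LINT y|NN k. norm (gf a w k (Phi k (\<alpha>, y)) *v u))"
      by (simp add: integral_norm_bound)
    also have "\<dots> \<le> (LINT y|NN k. (c ^ (2*k+1) * norm u) * indicator (Omega k a) (Phi k (\<alpha>, y)))"
    proof (rule integral_mono)
      show "integrable (NN k) (\<lambda>y. norm (gf a w k (Phi k (\<alpha>, y)) *v u))"
        by (intro integrable_norm integrable_bounded_linear[OF bl_mv_left True])
      show "integrable (NN k) (\<lambda>y. (c ^ (2*k+1) * norm u) * indicator (Omega k a) (Phi k (\<alpha>, y)))"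
        using sl by simp
      fix y
      show "norm (gf a w k (Phi k (\<alpha>, y)) *v u) \<le> (c ^ (2*k+1) * norm u) * indicator (Omega k a) (Phi k (\<alpha>, y))"
        using vprod_opbound[OF wb c] by (simp add: gf_def indicator_def scaleR_mv)
    qed
    also have "\<dots> = c ^ (2*k+1) * d * norm u" by (simp add: d_def)
    finally show ?thesis .
  next
    case False
    then have "Gf a w k \<alpha> = 0" unfolding Gf_def by (rule not_integrable_integral_eq)
    then show ?thesis using d0 c by simp
  qed
  have "opnorm (Acon a w k \<alpha>) \<le> c ^ (2*k+1) * (indicator S \<alpha> * d)"
    unfolding opnorm_def
  proof (rule onorm_bound)
    show "0 \<le> c ^ (2*k+1) * (indicator S \<alpha> * d)" using c d0 by simp
    fix u
    have "norm (Acon a w k \<alpha> *v u) = indicator S \<alpha> * norm (Gf a w k \<alpha> *v u)"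
      by (simp add: Acon_def S_def scaleR_mv norm_smat_mv)
    also have "\<dots> \<le> indicator S \<alpha> * (c ^ (2*k+1) * d * norm u)"
      using Gb[of u] by (intro mult_left_mono) auto
    finally show "norm (Acon a w k \<alpha> *v u) \<le> c ^ (2*k+1) * (indicator S \<alpha> * d) * norm u"
      by (simp add: algebra_simps)
  qed
  then show ?thesis by (simp add: S_def d_def)
qed

definition K1 :: "complex^1^1" where "K1 = (\<chi> i j. \<i>)"

lemma vhat_eq: "vhat a = (\<lambda>x. indicator {0..a} x *\<^sub>R K1)"
  by (auto simp: vhat_def K1_def fun_eq_iff)

lemma norm_K1: "norm K1 = 1"
  by (simp add: K1_def norm_vec_def L2_set_def UNIV_1)

lemma vhat_meas: "vhat a \<in> borel_measurable lborel"
  unfolding vhat_eq by measurable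

lemma vhat_int: "integrable lborel (\<lambda>t. norm (vhat a t))"
proof -
  have "(\<lambda>t. norm (vhat a t)) = indicator {0..a}"
    by (auto simp: vhat_eq norm_K1 fun_eq_iff indicator_def)
  then show ?thesis by (simp add: integrable_indicator_iff emeasure_lborel_Icc_eq)
qed

lemma vprod_vhat:
  assumes "\<And>j. j \<le> 2*k \<Longrightarrow> x j \<in> {0..a}"
  shows "vprod (vhat a) k x = (\<chi> i j. - \<i>)"
  using assms
proof (induction k)
  case 0
  then show ?case by (simp add: vhat_def cadj_def vec_eq_iff)
next
  case (Suc k)
  have "vprod (vhat a) k x = (\<chi> i j. - \<i>)" using Suc by auto
  moreover have "vhat a (x (2*k+2)) = (\<chi> i j. \<i>)" "vhat a (x (2*k+1)) = (\<chi> i j. \<i>)"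
    using Suc.prems[of "2*k+2"] Suc.prems[of "2*k+1"] by (auto simp: vhat_def)
  ultimately show ?case
    by (simp add: cadj_def vec_eq_iff matrix_matrix_mult_def UNIV_1)
qed

lemma Acon_vhat:
  assumes sl: "integrable (NN k) (\<lambda>y. indicator (Omega k a) (Phi k (\<alpha>, y)) :: real)"
  shows "(-1) ^ (k + 1) * (Acon a (vhat a) k \<alpha> $ 1 $ 1) =
    complex_of_real (indicator {0<..<real (k + 1) * a} \<alpha> * (LINT y|NN k. indicator (Omega k a) (Phi k (\<alpha>, y))))"
proof -
  define d where "d = (LINT y|NN k. indicator (Omega k a) (Phi k (\<alpha>, y)) :: real)"
  define K0 where "K0 = (\<chi> i j. - \<i> :: complex^1^1)"
  have "Gf a (vhat a) k \<alpha> = (LINT y|NN k. indicator (Omega k a) (Phi k (\<alpha>, y)) *\<^sub>R K0)"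
    unfolding Gf_def
  proof (rule Bochner_Integration.integral_cong[OF refl])
    fix y
    show "gf a (vhat a) k (Phi k (\<alpha>, y)) = indicator (Omega k a) (Phi k (\<alpha>, y)) *\<^sub>R K0"
    proof (cases "Phi k (\<alpha>, y) \<in> Omega k a")
      case True
      then show ?thesis using Omega_props[OF True]
        by (simp add: gf_def K0_def vprod_vhat)
    next
      case False then show ?thesis by (simp add: gf_def)
    qed
  qed
  also have "\<dots> = d *\<^sub>R K0" unfolding d_def by (rule integral_scaleR_left) (use sl in auto)
  finally have G: "Gf a (vhat a) k \<alpha> = d *\<^sub>R K0" .
  have pp: "(-1::complex) ^ (k + 1) * (-1) ^ (k + 1) = 1"
    by (simp add: power_mult_distrib[symmetric])
  define ind where "ind = (indicator {0<..<real (k + 1) * a} \<alpha> :: real)"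
  have e1: "Acon a (vhat a) k \<alpha> $ 1 $ 1 = complex_of_real ind * (smat (cst k) (d *\<^sub>R K0) $ 1 $ 1)"
    unfolding Acon_def G ind_def by (rule scaleR_entry)
  have e2: "smat (cst k) (d *\<^sub>R K0) $ 1 $ 1 = cst k * (complex_of_real d * (- \<i>))"
    unfolding smat_def K0_def by (simp only: vec_lambda_beta scaleR_entry)
  have "(-1) ^ (k + 1) * (Acon a (vhat a) k \<alpha> $ 1 $ 1) =
      complex_of_real ind * complex_of_real d * ((-1) ^ (k + 1) * (-1) ^ (k + 1)) * (\<i> * (- \<i>))"
    unfolding e1 e2 by (simp only: cst_def mult_ac)
  also have "\<dots> = complex_of_real (ind * d)" unfolding pp by simp
  finally show ?thesis by (simp add: d_def ind_def)
qed

lemma Omega_ind_integrable: "integrable (PP k) (\<lambda>x. indicator (Omega k a) x :: real)"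
proof (rule PP_integrable_bound[where h="indicator {0..a}" and C=1])
  show "(\<lambda>x. indicator (Omega k a) x :: real) \<in> borel_measurable (PP k)" by (rule ind_Omega_meas)
  show "(indicator {0..a} :: real \<Rightarrow> real) \<in> borel_measurable lborel" by simp
  show "\<And>t. 0 \<le> (indicator {0..a} t :: real)" by simp
  show "integrable lborel (indicator {0..a} :: real \<Rightarrow> real)"
    by (simp add: integrable_indicator_iff emeasure_lborel_Icc_eq)
  fix x
  show "norm (indicator (Omega k a) x :: real) \<le> 1 * (\<Prod>j\<le>2*k. indicator {0..a} (x j))"
  proof (cases "x \<in> Omega k a")
    case True
    then have "(\<Prod>j\<le>2*k. indicator {0..a} (x j) :: real) = 1"
      using Omega_props[OF True] by (intro prod.neutral) (auto simp: indicator_def)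
    then show ?thesis by simp
  next
    case False then show ?thesis by (simp add: prod_nonneg)
  qed
qed simp

lemma le_1_sq: "(x::real) \<le> 1 + x\<^sup>2"
proof (cases "x \<le> 1")
  case True then show ?thesis using zero_le_power2[of x] by linarith
next
  case False
  then have "x * 1 \<le> x * x" by (intro mult_left_mono) auto
  then show ?thesis by (simp add: power2_eq_square)
qed

theorem lemmaA4:
  fixes k :: nat and a :: real and v :: "real \<Rightarrow> complex ^ 'm2 ^ 'm1"
  assumes a_pos: "a > 0"
    and v_meas: "set_borel_measurable lborel {0<..} v"
    and v_L2: "set_integrable lborel {0<..} (\<lambda>x. (norm (v x))\<^sup>2)"
    and v_supp: "AE x in lborel. x > a \<longrightarrow> v x = 0"
  shows "\<exists>A. represents k a v A \<and>
           (\<forall>B. represents k a v B \<longrightarrow>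
              (AE \<alpha> in lborel. \<alpha> \<in> {0<..<real (k + 1) * a} \<longrightarrow> B \<alpha> = A \<alpha>)) \<and>
           (\<forall>c::real. c > 0 \<and> continuous_on {0..a} v \<and> (\<forall>x\<in>{0..a}. opnorm (v x) \<le> c) \<longrightarrow>
              (\<forall>Ahat. represents k a (vhat a) Ahat \<longrightarrow>
                 (AE \<alpha> in lborel. \<alpha> \<in> {0<..<real (k + 1) * a} \<longrightarrow>
                    (let f = (-1) ^ (k + 1) * (Ahat \<alpha> $ 1 $ 1) in
                       f \<in> \<real> \<and> opnorm (A \<alpha>) \<le> c ^ (2 * k + 1) * Re f))))"
proof -
  define w where "w t = indicator {0..a} t *\<^sub>R (indicator {0<..} t *\<^sub>R v t) + indicator {0} t *\<^sub>R v 0" for t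
  have w_eq: "v t = w t" if "t \<in> {0..a}" for t
    using that by (cases "t = 0") (auto simp: w_def indicator_def)
  have w_out: "w t = 0" if "t \<notin> {0..a}" for t
    using that a_pos by (auto simp: w_def indicator_def)
  have vm: "(\<lambda>x. indicator {0<..} x *\<^sub>R v x) \<in> borel_measurable lborel"
    using v_meas unfolding set_borel_measurable_def .
  have wm: "w \<in> borel_measurable lborel"
    unfolding w_def using vm by measurable
  have wi: "integrable lborel (\<lambda>t. norm (w t))"
  proof -
    define f where "f t = indicator {0..a} t + indicator {0<..} t *\<^sub>R (norm (v t))\<^sup>2" for t
    have fi: "integrable lborel f"
      unfolding f_def using v_L2 unfolding set_integrable_def
      by (intro Bochner_Integration.integrable_add) (auto simp: integrable_indicator_iff emeasure_lborel_Icc_eq)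
    show ?thesis
    proof (rule Bochner_Integration.integrable_bound[OF fi])
      show "(\<lambda>t. norm (w t)) \<in> borel_measurable lborel" using wm by simp
      have "AE t in lborel. t \<noteq> 0" by (rule AE_lborel_singleton)
      then show "AE t in lborel. norm (norm (w t)) \<le> norm (f t)"
      proof eventually_elim
        case (elim t)
        show ?case
        proof (cases "t \<in> {0..a}")
          case True
          then have t: "0 < t" "t \<le> a" using elim by auto
          have "norm (v t) \<le> 1 + (norm (v t))\<^sup>2"
            by (rule le_1_sq)
          moreover have "f t = 1 + (norm (v t))\<^sup>2" using t by (simp add: f_def)
          ultimately show ?thesis using w_eq[OF True] by simp
        next
          case False then show ?thesis by (simp add: w_out)
        qed
      qed
    qed
  qed
  define A where "A = Acon a w k"
  have repA: "represents k a v A" unfolding A_def by (rule represents_con[OF wm wi w_eq])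
  show ?thesis
  proof (intro exI[of _ A] conjI allI impI)
    show "represents k a v A" by (rule repA)
    fix B assume "represents k a v B"
    then show "AE \<alpha> in lborel. \<alpha> \<in> {0<..<real (k + 1) * a} \<longrightarrow> B \<alpha> = A \<alpha>"
      by (rule represents_unique[OF repA])
  next
    fix c :: real and Ahat
    assume hc: "c > 0 \<and> continuous_on {0..a} v \<and> (\<forall>x\<in>{0..a}. opnorm (v x) \<le> c)"
      and hA: "represents k a (vhat a) Ahat"
    have wb: "opnorm (w t) \<le> c" for t
    proof (cases "t \<in> {0..a}")
      case True
      then have "opnorm (v t) \<le> c" using hc by blast
      then show ?thesis using w_eq[OF True] by simp
    next
      case False then show ?thesis using hc by (simp add: w_out)
    qed
    have rep0: "represents k a (vhat a) (Acon a (vhat a) k)"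
      by (rule represents_con[OF vhat_meas vhat_int]) simp
    have AE1: "AE \<alpha> in lborel. \<alpha> \<in> {0<..<real (k + 1) * a} \<longrightarrow> Ahat \<alpha> = Acon a (vhat a) k \<alpha>"
      by (rule represents_unique[OF rep0 hA])
    have AE2: "AE \<alpha> in lborel. integrable (NN k) (\<lambda>y. indicator (Omega k a) (Phi k (\<alpha>, y)) :: real)"
      by (rule PP_fubini(3)[OF Omega_ind_integrable])
    from AE1 AE2 show "AE \<alpha> in lborel. \<alpha> \<in> {0<..<real (k + 1) * a} \<longrightarrow>
                    (let f = (-1) ^ (k + 1) * (Ahat \<alpha> $ 1 $ 1) in
                       f \<in> \<real> \<and> opnorm (A \<alpha>) \<le> c ^ (2 * k + 1) * Re f)"
    proof eventually_elim
      case (elim \<alpha>)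
      show ?case
      proof
        assume S: "\<alpha> \<in> {0<..<real (k + 1) * a}"
        define d where "d = (LINT y|NN k. indicator (Omega k a) (Phi k (\<alpha>, y)) :: real)"
        have f: "(-1) ^ (k + 1) * (Ahat \<alpha> $ 1 $ 1) =
            complex_of_real (indicator {0<..<real (k + 1) * a} \<alpha> * d)"
          using Acon_vhat[OF elim(2)] elim(1) S unfolding d_def by simp
        have ob: "opnorm (A \<alpha>) \<le> c ^ (2*k+1) * (indicator {0<..<real (k + 1) * a} \<alpha> * d)"
          unfolding A_def d_def using hc by (intro Acon_opbound[OF wm wb _ elim(2)]) auto
        show "let f = (-1) ^ (k + 1) * (Ahat \<alpha> $ 1 $ 1) in
                       f \<in> \<real> \<and> opnorm (A \<alpha>) \<le> c ^ (2 * k + 1) * Re f"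
          unfolding Let_def f using ob by simp
      qed
    qed
  qed
qed

end
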